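(* Let $n$ be a positive integer and $w_1\le\dots\le w_m$ a feasible partition of $n$ with partial sums $R_i=w_1+\dots+w_i$, $R_0=0$. Then for every $1\le i\le m$, $R_{i-1} \ge \frac{w_i-1}{2}$.
   Context: A weighing partition of a positive integer $n$ is a multiset of positive integers summing to $n$ such that every integer $\ell$ with $1\le\ell\le n$ is a sum $\sum_j u_jw_j$ with $u_j\in\{-1,0,1\}$. A feasible partition of $n$ is a weighing partition of $n$ whose number of parts $m$ is minimal among all weighing partitions of $n$, written $w_1\le\dots\le w_m$. *)

theory Defs
  imports Complex_Main
begin

text \<open>A partition of n is represented as a list of positive integers summing to n
  (the multiset of parts is mset of the list; order is irrelevant for the notions below).\<close>

definition weighing_partition :: "nat \<Rightarrow> nat list \<Rightarrow> bool" where
  "weighing_partition n ws \<longleftrightarrow>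
     (\<forall>w\<in>set ws. 0 < w) \<and> sum_list ws = n \<and>
     (\<forall>l\<in>{1..n}. \<exists>u :: nat \<Rightarrow> int. (\<forall>j<length ws. u j \<in> {-1, 0, 1}) \<and>
        int l = (\<Sum>j<length ws. u j * int (ws ! j)))"

definition feasible_partition :: "nat \<Rightarrow> nat list \<Rightarrow> bool" where
  "feasible_partition n ws \<longleftrightarrow> weighing_partition n ws \<and>
     (\<forall>vs. weighing_partition n vs \<longrightarrow> length ws \<le> length vs)"

end

theory Submission
  imports Defs
begin

theorem mainTheorem3:
  fixes n :: nat and w :: "nat list"
  assumes "0 < n"
    and "feasible_partition n w"
    and "sorted w"
    and "1 \<le> i" and "i \<le> length w"
  shows "real (\<Sum>j<i - 1. w ! j) \<ge> (real (w ! (i - 1)) - 1) / 2"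
proof (rule ccontr)
  define k where "k = i - 1"
  define S where "S = (\<Sum>j<k. w ! j)"
  define L where "L = length w"
  have kL: "k < L" using assms(4,5) by (simp add: k_def L_def)
  assume "\<not> ?thesis"
  hence "real (w ! k) > 2 * real S + 1" unfolding k_def[symmetric] S_def[symmetric] by (simp add: field_simps)
  hence "w ! k > 2 * S + 1" by linarith
  hence big: "w ! k \<ge> 2 * S + 2" by linarith
  have W: "weighing_partition n w" using assms(2) by (simp add: feasible_partition_def)
  have nsum: "n = (\<Sum>j<L. w ! j)"
    using W by (simp add: weighing_partition_def L_def sum_list_sum_nth atLeast0LessThan)
  have split: "(\<Sum>j<L. f j) = (\<Sum>j<k. f j) + (\<Sum>j\<in>{k..<L}. f j)" for f :: "nat \<Rightarrow> 'a::comm_monoid_add"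
  proof -
    have "{..<L} = {..<k} \<union> {k..<L}" using kL by auto
    moreover have "sum f ({..<k} \<union> {k..<L}) = sum f {..<k} + sum f {k..<L}"
      by (rule sum.union_disjoint) auto
    ultimately show ?thesis by simp
  qed
  have "(\<Sum>j\<in>{k..<L}. w ! j) \<ge> w ! k"
  proof -
    have "(\<Sum>j\<in>{k..<L}. w ! j) \<ge> (\<Sum>j\<in>{k}. w ! j)"
      by (rule sum_mono2) (use kL in auto)
    thus ?thesis by simp
  qed
  hence nge: "n \<ge> S + w ! k" using nsum split[of "\<lambda>j. w ! j"] by (simp add: S_def)
  define l where "l = n - (2 * S + 1)"
  have l1: "l \<in> {1..n}" using nge big by (simp add: l_def)
  then obtain u :: "nat \<Rightarrow> int" where u: "\<forall>j<L. u j \<in> {-1, 0, 1}"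
      and ul: "int l = (\<Sum>j<L. u j * int (w ! j))"
    using W unfolding weighing_partition_def L_def by blast
  have "int (2 * S + 1) = int n - int l" using nge big by (simp add: l_def)
  also have "\<dots> = (\<Sum>j<L. (1 - u j) * int (w ! j))"
    using nsum ul by (simp add: sum_subtractf algebra_simps)
  finally have eq: "int (2 * S + 1) = (\<Sum>j<k. (1 - u j) * int (w ! j)) + (\<Sum>j\<in>{k..<L}. (1 - u j) * int (w ! j))"
    using split by simp
  have A1: "(\<Sum>j<k. (1 - u j) * int (w ! j)) \<le> (\<Sum>j<k. 2 * int (w ! j))"
  proof (rule sum_mono)
    fix j assume "j \<in> {..<k}"
    hence "j < L" using kL by auto
    hence "1 - u j \<le> 2" using u by auto
    thus "(1 - u j) * int (w ! j) \<le> 2 * int (w ! j)" by (simp add: mult_right_mono)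
  qed
  have A2: "(\<Sum>j<k. 2 * int (w ! j)) = 2 * int S" by (simp add: S_def sum_distrib_left)
  have nonneg: "0 \<le> (1 - u j) * int (w ! j)" if "j < L" for j
    using u that by auto
  have B0: "0 \<le> (\<Sum>j<k. (1 - u j) * int (w ! j))"
    by (rule sum_nonneg) (use nonneg kL in auto)
  show False
  proof (cases "\<exists>j\<in>{k..<L}. u j \<noteq> 1")
    case True
    then obtain j where j: "j \<in> {k..<L}" "u j \<noteq> 1" by blast
    have "w ! k \<le> w ! j" using assms(3) j by (auto simp: L_def sorted_iff_nth_mono)
    moreover have "1 \<le> 1 - u j" using u j by auto
    ultimately have t: "int (w ! k) \<le> (1 - u j) * int (w ! j)"
      proof -
        have "int (w ! j) \<le> (1 - u j) * int (w ! j)"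
          using mult_right_mono[of 1 "1 - u j" "int (w ! j)"] \<open>1 \<le> 1 - u j\<close> by simp
        thus ?thesis using \<open>w ! k \<le> w ! j\<close> by linarith
      qed
    have "(\<Sum>j\<in>{j}. (1 - u j) * int (w ! j)) \<le> (\<Sum>j\<in>{k..<L}. (1 - u j) * int (w ! j))"
      by (rule sum_mono2) (use j nonneg in auto)
    hence "int (w ! k) \<le> (\<Sum>j\<in>{k..<L}. (1 - u j) * int (w ! j))" using t by simp
    thus False using eq B0 big by linarith
  next
    case False
    hence "(\<Sum>j\<in>{k..<L}. (1 - u j) * int (w ! j)) = 0" by simp
    thus False using eq A1 A2 by linarith
  qed
qed

end
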